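(* Let $\mathcal{X}=L^p$ for some $p\in\{0,1,\infty\}$ and let $\varphi$ be a dynamic LM-measure on $\mathcal{X}$. The following are equivalent: (1) $\varphi$ is weakly acceptance time consistent, i.e. for all $X\in\mathcal{X}$, $s,t\in\mathbb{T}$ with $s>t$, and $m_s\in\bar L^0_s$: $\varphi_s(X)\ge m_s\Rightarrow \varphi_t(X)\ge\operatorname{Essinf}_t(m_s)$; (2) for all $X\in\mathcal{X}$ and $s>t$: $\varphi_t(X)\ge\operatorname{Essinf}_t\varphi_s(X)$; (3) for all $X\in\mathcal{X}$, $s>t$ and $m_t\in\bar L^0_t$: $\varphi_s(X)\ge m_t\Rightarrow\varphi_t(X)\ge m_t$. If in addition $\varphi$ is a dynamic monetary utility measure, these are also equivalent to: (4) for all $X\in\mathcal{X}$ and $s>t$: $\varphi_s(X)\ge0\Rightarrow\varphi_t(X)\ge0$. Analogously, the following are equivalent: (1') $\varphi$ is weakly rejection time consistent, i.e. $\varphi_s(X)\le m_s\Rightarrow\varphi_t(X)\le\operatorname{Esssup}_t(m_s)$ for all $X$, $s>t$, $m_s\in\bar L^0_s$; (2') $\varphi_t(X)\le\operatorname{Esssup}_t\varphi_s(X)$ for all $X$, $s>t$; (3') $\varphi_s(X)\le m_t\Rightarrow\varphi_t(X)\le m_t$ for all $X$, $s>t$, $m_t\in\bar L^0_t$; and, if $\varphi$ is a dynamic monetary utility measure, also (4') $\varphi_s(X)\le0\Rightarrow\varphi_t(X)\le0$ for all $X$, $s>t$.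
   Context: Let $(\Omega,\mathcal{F},\{\mathcal{F}_t\}_{t\in\mathbb{T}},P)$ be a filtered probability space, $\mathbb{T}=\{0,1,\dots,T\}$, $\mathcal{F}_0$ trivial. $\bar L^0_t$ denotes $\mathcal{F}_t$-measurable random variables with values in $[-\infty,\infty]$; $L^p_t=L^p(\Omega,\mathcal{F}_t,P)$, $L^p=L^p_T$, ordered pointwise a.s. Conventions: $\infty-\infty=-\infty$, $0\cdot\pm\infty=0$. A dynamic LM-measure is a family $\{\varphi_t\}_{t\in\mathbb{T}}$ of maps $\varphi_t:\mathcal{X}\to\bar L^0_t$ with $1_A\varphi_t(X)=1_A\varphi_t(1_AX)$ for all $A\in\mathcal{F}_t$ and $X\le Y\Rightarrow\varphi_t(X)\le\varphi_t(Y)$. A dynamic monetary utility measure is a dynamic LM-measure with $\varphi_t(0)=0$ and $\varphi_t(X+c_t)=\varphi_t(X)+c_t$ for all $t\in\mathbb{T}$, $X\in\mathcal{X}$, $c_t\in L^\infty_t$. For bounded $X$, $\operatorname{Essinf}_tX$ is the largest $\mathcal{F}_t$-measurable random variable a.s. dominated by $X$ (equivalently the unique $\mathcal{F}_t$-measurable $U$ with $\operatorname{essinf}_{A}X=\operatorname{essinf}_{A}U$ for all $A\in\mathcal{F}_t$), and $\operatorname{Esssup}_tX=-\operatorname{Essinf}_t(-X)$; for $X\in\bar L^0_T$ set $\operatorname{Essinf}_tX:=\lim_{n}\operatorname{Essinf}_t(X^+\wedge n)-\lim_n\operatorname{Esssup}_t(X^-\wedge n)$ and $\operatorname{Esssup}_tX:=-\operatorname{Essinf}_t(-X)$,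 where $X^+=X\vee0$, $X^-=(-X)\vee0$. *)

theory Defs
  imports "HOL-Probability.Probability"
begin

definition filtration :: "'a measure \<Rightarrow> (nat \<Rightarrow> 'a measure) \<Rightarrow> nat \<Rightarrow> bool" where
  "filtration M F T \<longleftrightarrow>
     (\<forall>t\<le>T. subalgebra M (F t)) \<and>
     (\<forall>s t. s \<le> t \<longrightarrow> t \<le> T \<longrightarrow> sets (F s) \<subseteq> sets (F t)) \<and>
     sets (F 0) = {{}, space M}"

definition ereal_minus_conv :: "ereal \<Rightarrow> ereal \<Rightarrow> ereal" where
  "ereal_minus_conv a b = (if a = \<infinity> \<and> b = \<infinity> then -\<infinity> else a - b)"

definition is_Essinf :: "'a measure \<Rightarrow> (nat \<Rightarrow> 'a measure) \<Rightarrow> nat \<Rightarrow> ('a \<Rightarrow> ereal) \<Rightarrow> ('a \<Rightarrow> ereal) \<Rightarrow> bool" where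
  "is_Essinf M F t X U \<longleftrightarrow>
     U \<in> borel_measurable (F t) \<and> (AE \<omega> in M. U \<omega> \<le> X \<omega>) \<and>
     (\<forall>V \<in> borel_measurable (F t). (AE \<omega> in M. V \<omega> \<le> X \<omega>) \<longrightarrow> (AE \<omega> in M. V \<omega> \<le> U \<omega>))"

text \<open>Essinf for bounded random variables.\<close>
definition Essinf_bdd :: "'a measure \<Rightarrow> (nat \<Rightarrow> 'a measure) \<Rightarrow> nat \<Rightarrow> ('a \<Rightarrow> ereal) \<Rightarrow> ('a \<Rightarrow> ereal)" where
  "Essinf_bdd M F t X = (SOME U. is_Essinf M F t X U)"

definition Esssup_bdd :: "'a measure \<Rightarrow> (nat \<Rightarrow> 'a measure) \<Rightarrow> nat \<Rightarrow> ('a \<Rightarrow> ereal) \<Rightarrow> ('a \<Rightarrow> ereal)" where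
  "Esssup_bdd M F t X = (\<lambda>\<omega>. - Essinf_bdd M F t (\<lambda>x. - X x) \<omega>)"

definition Essinf :: "'a measure \<Rightarrow> (nat \<Rightarrow> 'a measure) \<Rightarrow> nat \<Rightarrow> ('a \<Rightarrow> ereal) \<Rightarrow> ('a \<Rightarrow> ereal)" where
  "Essinf M F t X = (\<lambda>\<omega>.
     ereal_minus_conv
       (lim (\<lambda>n::nat. Essinf_bdd M F t (\<lambda>x. min (max (X x) 0) (ereal (real n))) \<omega>))
       (lim (\<lambda>n::nat. Esssup_bdd M F t (\<lambda>x. min (max (- X x) 0) (ereal (real n))) \<omega>)))"

definition Esssup :: "'a measure \<Rightarrow> (nat \<Rightarrow> 'a measure) \<Rightarrow> nat \<Rightarrow> ('a \<Rightarrow> ereal) \<Rightarrow> ('a \<Rightarrow> ereal)" where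
  "Esssup M F t X = (\<lambda>\<omega>. - Essinf M F t (\<lambda>x. - X x) \<omega>)"

datatype Lexp = L0 | L1 | Linf

definition ess_bounded :: "'a measure \<Rightarrow> ('a \<Rightarrow> real) \<Rightarrow> bool" where
  "ess_bounded M X \<longleftrightarrow> (\<exists>C. AE \<omega> in M. \<bar>X \<omega>\<bar> \<le> C)"

definition Lspace :: "Lexp \<Rightarrow> 'a measure \<Rightarrow> 'a measure \<Rightarrow> ('a \<Rightarrow> real) set" where
  "Lspace p M N = {X. X \<in> borel_measurable N \<and>
      (case p of L0 \<Rightarrow> True | L1 \<Rightarrow> integrable M X | Linf \<Rightarrow> ess_bounded M X)}"

definition dynamic_LM_measure ::
  "'a measure \<Rightarrow> (nat \<Rightarrow> 'a measure) \<Rightarrow> nat \<Rightarrow> ('a \<Rightarrow> real) set \<Rightarrow>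
   (nat \<Rightarrow> ('a \<Rightarrow> real) \<Rightarrow> ('a \<Rightarrow> ereal)) \<Rightarrow> bool" where
  "dynamic_LM_measure M F T Xs phi \<longleftrightarrow>
     (\<forall>t\<le>T. \<forall>X\<in>Xs. phi t X \<in> borel_measurable (F t)) \<and>
     (\<forall>t\<le>T. \<forall>A\<in>sets (F t). \<forall>X\<in>Xs.
        AE \<omega> in M. ereal (indicator A \<omega>) * phi t X \<omega>
                   = ereal (indicator A \<omega>) * phi t (\<lambda>x. indicator A x * X x) \<omega>) \<and>
     (\<forall>t\<le>T. \<forall>X\<in>Xs. \<forall>Y\<in>Xs. (AE \<omega> in M. X \<omega> \<le> Y \<omega>) \<longrightarrow> (AE \<omega> in M. phi t X \<omega> \<le> phi t Y \<omega>))"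

definition dynamic_monetary_utility_measure ::
  "'a measure \<Rightarrow> (nat \<Rightarrow> 'a measure) \<Rightarrow> nat \<Rightarrow> ('a \<Rightarrow> real) set \<Rightarrow>
   (nat \<Rightarrow> ('a \<Rightarrow> real) \<Rightarrow> ('a \<Rightarrow> ereal)) \<Rightarrow> bool" where
  "dynamic_monetary_utility_measure M F T Xs phi \<longleftrightarrow>
     dynamic_LM_measure M F T Xs phi \<and>
     (\<forall>t\<le>T. AE \<omega> in M. phi t (\<lambda>x. 0) \<omega> = 0) \<and>
     (\<forall>t\<le>T. \<forall>X\<in>Xs. \<forall>c \<in> Lspace Linf M (F t).
        AE \<omega> in M. phi t (\<lambda>x. X x + c x) \<omega> = phi t X \<omega> + ereal (c \<omega>))"

definition weakly_acceptance_tc ::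
  "'a measure \<Rightarrow> (nat \<Rightarrow> 'a measure) \<Rightarrow> nat \<Rightarrow> ('a \<Rightarrow> real) set \<Rightarrow>
   (nat \<Rightarrow> ('a \<Rightarrow> real) \<Rightarrow> ('a \<Rightarrow> ereal)) \<Rightarrow> bool" where
  "weakly_acceptance_tc M F T Xs phi \<longleftrightarrow>
     (\<forall>X\<in>Xs. \<forall>s t. t < s \<longrightarrow> s \<le> T \<longrightarrow> (\<forall>m \<in> borel_measurable (F s).
        (AE \<omega> in M. phi s X \<omega> \<ge> m \<omega>) \<longrightarrow> (AE \<omega> in M. phi t X \<omega> \<ge> Essinf M F t m \<omega>)))"

definition weakly_rejection_tc ::
  "'a measure \<Rightarrow> (nat \<Rightarrow> 'a measure) \<Rightarrow> nat \<Rightarrow> ('a \<Rightarrow> real) set \<Rightarrow>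
   (nat \<Rightarrow> ('a \<Rightarrow> real) \<Rightarrow> ('a \<Rightarrow> ereal)) \<Rightarrow> bool" where
  "weakly_rejection_tc M F T Xs phi \<longleftrightarrow>
     (\<forall>X\<in>Xs. \<forall>s t. t < s \<longrightarrow> s \<le> T \<longrightarrow> (\<forall>m \<in> borel_measurable (F s).
        (AE \<omega> in M. phi s X \<omega> \<le> m \<omega>) \<longrightarrow> (AE \<omega> in M. phi t X \<omega> \<le> Esssup M F t m \<omega>)))"

end

theory Submission imports Defs begin

lemma ex_is_Essinf:
  assumes P: "prob_space M" and sub: "subalgebra M N" and ab: "a \<le> b"
    and bnd: "\<And>\<omega>. \<omega> \<in> space M \<Longrightarrow> ereal a \<le> X \<omega> \<and> X \<omega> \<le> ereal b"
  shows "\<exists>U. U \<in> borel_measurable N \<and> (AE \<omega> in M. U \<omega> \<le> X \<omega>) \<and>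
     (\<forall>V\<in>borel_measurable N. (AE \<omega> in M. V \<omega> \<le> X \<omega>) \<longrightarrow> (AE \<omega> in M. V \<omega> \<le> U \<omega>))"
proof -
  interpret prob_space M by fact
  define S where "S = {f::'a\<Rightarrow>real. f \<in> borel_measurable N \<and> (\<forall>\<omega>\<in>space M. a \<le> f \<omega> \<and> f \<omega> \<le> b)
      \<and> (AE \<omega> in M. ereal (f \<omega>) \<le> X \<omega>)}"
  have intS: "integrable M f" if "f \<in> S" for f
  proof (rule integrable_const_bound[where B="\<bar>a\<bar> + \<bar>b\<bar>"])
    show "AE x in M. norm (f x) \<le> \<bar>a\<bar> + \<bar>b\<bar>" using that unfolding S_def by (intro AE_I2) (auto simp: abs_le_iff)
    show "f \<in> borel_measurable M" using that measurable_from_subalg[OF sub] unfolding S_def by auto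
  qed
  have leb: "integral\<^sup>L M f \<le> b" if "f \<in> S" for f
  proof -
    have "integral\<^sup>L M f \<le> integral\<^sup>L M (\<lambda>_. b)"
      by (rule integral_mono[OF intS[OF that]]) (use that in \<open>auto simp: S_def\<close>)
    then show ?thesis by (simp add: prob_space)
  qed
  have aS: "(\<lambda>_. a) \<in> S" using ab bnd unfolding S_def by auto
  define I where "I = (\<lambda>f. integral\<^sup>L M f) ` S"
  have Ine: "I \<noteq> {}" using aS unfolding I_def by auto
  have Ibdd: "bdd_above I" unfolding I_def bdd_above_def using leb by auto
  define s where "s = Sup I"
  have "\<forall>k::nat. \<exists>f\<in>S. s - 1 / Suc k < integral\<^sup>L M f"
  proof
    fix k :: nat
    have "s - 1 / Suc k < Sup I" unfolding s_def by simp
    from less_cSupD[OF Ine this] show "\<exists>f\<in>S. s - 1 / Suc k < integral\<^sup>L M f" unfolding I_def by auto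
  qed
  then obtain f where fS: "\<And>k. f k \<in> S" and fint: "\<And>k. s - 1 / Suc k < integral\<^sup>L M (f k)"
    by metis
  define g where "g = (\<lambda>\<omega>. SUP k. f k \<omega>)"
  have fb: "a \<le> f k \<omega> \<and> f k \<omega> \<le> b" if "\<omega> \<in> space M" for k \<omega> using fS[of k] that unfolding S_def by auto
  have bdd: "bdd_above (range (\<lambda>k. f k \<omega>))" if "\<omega> \<in> space M" for \<omega>
    using fb[OF that] by (auto simp: bdd_above_def)
  have fg: "f k \<omega> \<le> g \<omega>" if "\<omega> \<in> space M" for k \<omega>
    unfolding g_def by (rule cSUP_upper[OF _ bdd[OF that]]) auto
  have gb: "a \<le> g \<omega> \<and> g \<omega> \<le> b" if "\<omega> \<in> space M" for \<omega>
  proof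
    show "a \<le> g \<omega>" using fb[OF that, of 0] fg[OF that, of 0] by linarith
    show "g \<omega> \<le> b" unfolding g_def by (rule cSUP_least) (use fb[OF that] in auto)
  qed
  have spN: "space N = space M" using sub by (simp add: subalgebra_def)
  have gmeas: "g \<in> borel_measurable N"
    unfolding g_def
    by (rule borel_measurable_cSUP) (use fS bdd spN in \<open>auto simp: S_def\<close>)
  have "AE \<omega> in M. \<forall>k. ereal (f k \<omega>) \<le> X \<omega>"
    using fS unfolding S_def by (auto simp: AE_all_countable)
  with AE_space have gX: "AE \<omega> in M. ereal (g \<omega>) \<le> X \<omega>"
  proof (eventually_elim)
    case (elim \<omega>)
    show ?case
    proof (rule ccontr)
      assume "\<not> ereal (g \<omega>) \<le> X \<omega>"
      then have lt: "X \<omega> < ereal (g \<omega>)" by simp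
      then obtain x where x: "X \<omega> = ereal x" using bnd[OF elim(1)] by (cases "X \<omega>") auto
      with lt have "x < g \<omega>" by simp
      then have "\<exists>k. x < f k \<omega>" unfolding g_def
        using less_cSUP_iff[OF _ bdd[OF elim(1)], of x] by auto
      then show False using elim(2) x by (metis ereal_less_eq(3) not_le)
    qed
  qed
  have gS: "g \<in> S" unfolding S_def using gmeas gb gX by auto
  have gs: "integral\<^sup>L M g = s"
  proof (rule antisym)
    show "integral\<^sup>L M g \<le> s" unfolding s_def I_def by (rule cSup_upper) (use gS Ibdd I_def in auto)
    have sk: "s - 1 / Suc k < integral\<^sup>L M g" for k
    proof -
      have "integral\<^sup>L M (f k) \<le> integral\<^sup>L M g"
        by (rule integral_mono[OF intS[OF fS] intS[OF gS]]) (use fg in auto)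
      then show ?thesis using fint[of k] by linarith
    qed
    show "s \<le> integral\<^sup>L M g"
    proof (rule ccontr)
      assume "\<not> s \<le> integral\<^sup>L M g"
      then have "0 < s - integral\<^sup>L M g" by simp
      then obtain k where "inverse (real (Suc k)) < s - integral\<^sup>L M g"
        using reals_Archimedean by blast
      with sk[of k] show False by (simp add: field_simps)
    qed
  qed
  show ?thesis
  proof (intro exI conjI ballI impI)
    show "(\<lambda>\<omega>. ereal (g \<omega>)) \<in> borel_measurable N" using gmeas by simp
    show "AE \<omega> in M. ereal (g \<omega>) \<le> X \<omega>" by fact
    fix V :: "'a \<Rightarrow> ereal" assume V: "V \<in> borel_measurable N" and VX: "AE \<omega> in M. V \<omega> \<le> X \<omega>"
    define cl where "cl = (\<lambda>\<omega>. real_of_ereal (max (min (V \<omega>) (ereal b)) (ereal a)))"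
    define h where "h = (\<lambda>\<omega>. max (g \<omega>) (cl \<omega>))"
    have clb: "a \<le> cl \<omega> \<and> cl \<omega> \<le> b" for \<omega>
      using ab unfolding cl_def by (cases "V \<omega>") (auto simp: min_def max_def)
    have hmeas: "h \<in> borel_measurable N" unfolding h_def cl_def using gmeas V by measurable
    have "AE \<omega> in M. ereal (h \<omega>) \<le> X \<omega>"
      using gX VX AE_space
    proof eventually_elim
      case (elim \<omega>)
      have "ereal (cl \<omega>) \<le> X \<omega>"
        using elim bnd[OF elim(3)] ab unfolding cl_def
        by (cases "V \<omega>"; cases "X \<omega>") (auto simp: min_def max_def)
      then show ?case using elim unfolding h_def by (simp add: max_def)
    qed
    then have hS: "h \<in> S" unfolding S_def using hmeas gb clb unfolding h_def by (auto simp: le_max_iff_disj)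
    have gh: "g \<omega> \<le> h \<omega>" for \<omega> unfolding h_def by simp
    have "integral\<^sup>L M h \<le> s" unfolding s_def I_def by (rule cSup_upper) (use hS Ibdd I_def in auto)
    moreover have "integral\<^sup>L M g \<le> integral\<^sup>L M h"
      by (rule integral_mono[OF intS[OF gS] intS[OF hS]]) (use gh in auto)
    ultimately have "integral\<^sup>L M (\<lambda>\<omega>. h \<omega> - g \<omega>) = 0"
      using gs by (simp add: Bochner_Integration.integral_diff[OF intS[OF hS] intS[OF gS]])
    then have "AE \<omega> in M. h \<omega> - g \<omega> = 0"
      using integral_nonneg_eq_0_iff_AE[of M "\<lambda>\<omega>. h \<omega> - g \<omega>"] intS[OF hS] intS[OF gS] gh by auto
    then show "AE \<omega> in M. V \<omega> \<le> ereal (g \<omega>)"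
      using VX AE_space
    proof eventually_elim
      case (elim \<omega>)
      then have "cl \<omega> \<le> g \<omega>" unfolding h_def by simp
      moreover have "V \<omega> \<le> ereal (cl \<omega>)"
        using elim bnd[OF elim(3)] ab unfolding cl_def
        by (cases "V \<omega>"; cases "X \<omega>") (auto simp: min_def max_def)
      ultimately show ?case by (meson ereal_less_eq(3) order.trans)
    qed
  qed
qed

lemma is_Essinf_bdd:
  assumes "prob_space M" "subalgebra M (F t)" "a \<le> b"
    "\<And>\<omega>. \<omega> \<in> space M \<Longrightarrow> ereal a \<le> X \<omega> \<and> X \<omega> \<le> ereal b"
  shows "is_Essinf M F t X (Essinf_bdd M F t X)"
proof -
  obtain U where "is_Essinf M F t X U"
    using ex_is_Essinf[OF assms(1-3)] assms(4) unfolding is_Essinf_def by blast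
  then show ?thesis unfolding Essinf_bdd_def by (rule someI[of "is_Essinf M F t X" U])
qed

lemma is_Essinf_mono:
  assumes "is_Essinf M F t X U" "is_Essinf M F t Y U'" "AE \<omega> in M. X \<omega> \<le> Y \<omega>"
  shows "AE \<omega> in M. U \<omega> \<le> U' \<omega>"
proof -
  have "AE \<omega> in M. U \<omega> \<le> X \<omega>" using assms unfolding is_Essinf_def by auto
  then have "AE \<omega> in M. U \<omega> \<le> Y \<omega>" using assms(3) by eventually_elim (rule order.trans)
  then show ?thesis using assms unfolding is_Essinf_def by auto
qed

lemma is_Essinf_ge:
  assumes "is_Essinf M F t X U" "V \<in> borel_measurable (F t)" "AE \<omega> in M. V \<omega> \<le> X \<omega>"
  shows "AE \<omega> in M. V \<omega> \<le> U \<omega>"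
  using assms unfolding is_Essinf_def by auto

lemma is_Essinf_le:
  assumes "is_Essinf M F t X U"
  shows "AE \<omega> in M. U \<omega> \<le> X \<omega>"
  using assms unfolding is_Essinf_def by auto

definition Pp :: "('a \<Rightarrow> ereal) \<Rightarrow> nat \<Rightarrow> 'a \<Rightarrow> ereal" where
  "Pp Z n = (\<lambda>x. min (max (Z x) 0) (ereal (real n)))"
definition Nn :: "('a \<Rightarrow> ereal) \<Rightarrow> nat \<Rightarrow> 'a \<Rightarrow> ereal" where
  "Nn Z n = (\<lambda>x. min (max (- Z x) 0) (ereal (real n)))"
definition UU where "UU M F t Z n = Essinf_bdd M F t (Pp Z n)"
definition WW where "WW M F t Z n = Essinf_bdd M F t (\<lambda>x. - Nn Z n x)"
definition EI where "EI M F t Z = (\<lambda>\<omega>. ereal_minus_conv (SUP n. UU M F t Z n \<omega>) (SUP n. - WW M F t Z n \<omega>))"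

lemma Essinf_unfold: "Essinf M F t Z = (\<lambda>\<omega>. ereal_minus_conv (lim (\<lambda>n. UU M F t Z n \<omega>)) (lim (\<lambda>n. - WW M F t Z n \<omega>)))"
  unfolding Essinf_def UU_def WW_def Pp_def Nn_def Esssup_bdd_def by simp

lemma conv_mono:
  fixes a a' b b' :: ereal
  assumes "0 \<le> a" "0 \<le> b'" "a \<le> a'" "b' \<le> b"
  shows "ereal_minus_conv a b \<le> ereal_minus_conv a' b'"
  using assms unfolding ereal_minus_conv_def
  by (cases a; cases b; cases a'; cases b') auto

lemma conv_id: "ereal_minus_conv (max z 0) (max (- z) 0) = (z::ereal)"
  unfolding ereal_minus_conv_def by (cases z) (auto simp: max_def)

lemma sup_min_nat: "(SUP n. min c (ereal (real n))) = (c::ereal)"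
proof (rule antisym)
  show "(SUP n. min c (ereal (real n))) \<le> c" by (rule SUP_least) simp
  show "c \<le> (SUP n. min c (ereal (real n)))"
  proof (cases c)
    case (real r)
    obtain n :: nat where "r \<le> real n" using real_arch_simple by blast
    then have "min c (ereal (real n)) = c" using real by simp
    then show ?thesis by (metis SUP_upper UNIV_I)
  next
    case PInf
    then have "(SUP n. min c (ereal (real n))) = (SUP n. ereal (real n))" by simp
    then show ?thesis using PInf SUP_nat_Infty by simp
  qed simp
qed

lemma le_neg_iff: "(a::ereal) \<le> - b \<longleftrightarrow> b \<le> - a"
  by (metis ereal_minus_le_minus ereal_uminus_uminus)

lemma Pp_bnd: "0 \<le> Pp Z n \<omega> \<and> Pp Z n \<omega> \<le> ereal (real n)"
  unfolding Pp_def by (cases "Z \<omega>") (auto simp: min_def max_def)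
lemma Nn_bnd: "ereal (- real n) \<le> - Nn Z n \<omega> \<and> - Nn Z n \<omega> \<le> 0"
  unfolding Nn_def by (cases "Z \<omega>") (auto simp: min_def max_def)
lemma Pp_bnd': "ereal 0 \<le> Pp Z n \<omega> \<and> Pp Z n \<omega> \<le> ereal (real n)"
  unfolding Pp_def by (cases "Z \<omega>") (auto simp: min_def max_def)
lemma Nn_bnd': "ereal (- real n) \<le> - Nn Z n \<omega> \<and> - Nn Z n \<omega> \<le> ereal 0"
  unfolding Nn_def by (cases "Z \<omega>") (auto simp: min_def max_def)
lemma Nn_nonpos: "- Nn Z n \<omega> \<le> 0"
  unfolding Nn_def by (cases "Z \<omega>") (auto simp: min_def max_def)
lemma Pp_mono: "Pp Z n \<omega> \<le> Pp Z (Suc n) \<omega>"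
  unfolding Pp_def by (cases "Z \<omega>") (auto simp: min_def max_def)
lemma Nn_mono: "- Nn Z (Suc n) \<omega> \<le> - Nn Z n \<omega>"
  unfolding Nn_def by (cases "Z \<omega>") (auto simp: min_def max_def)
lemma Pp_le: "Pp Z n \<omega> \<le> max (Z \<omega>) 0" unfolding Pp_def by simp
lemma Nn_le: "Nn Z n \<omega> \<le> max (- Z \<omega>) 0" unfolding Nn_def by simp
lemma Pp_mono2: "Z \<omega> \<le> Z' \<omega> \<Longrightarrow> Pp Z n \<omega> \<le> Pp Z' n \<omega>"
  unfolding Pp_def by (rule min.mono[OF max.mono]) auto
lemma Nn_mono2: "Z \<omega> \<le> Z' \<omega> \<Longrightarrow> - Nn Z n \<omega> \<le> - Nn Z' n \<omega>"
  unfolding Nn_def ereal_minus_le_minus by (rule min.mono[OF max.mono]) auto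
lemma SUP_Pp: "(SUP n. Pp Z n \<omega>) = max (Z \<omega>) 0" unfolding Pp_def by (rule sup_min_nat)
lemma SUP_Nn: "(SUP n. Nn Z n \<omega>) = max (- Z \<omega>) 0" unfolding Nn_def by (rule sup_min_nat)

context
  fixes M :: "'a measure" and F :: "nat \<Rightarrow> 'a measure" and t :: nat
  assumes P: "prob_space M" and sub: "subalgebra M (F t)"
begin

lemma isU: "is_Essinf M F t (Pp Z n) (UU M F t Z n)"
  unfolding UU_def by (rule is_Essinf_bdd[where F=F and t=t, OF P sub, of 0 "real n"]) (simp, rule Pp_bnd')

lemma isW: "is_Essinf M F t (\<lambda>x. - Nn Z n x) (WW M F t Z n)"
  unfolding WW_def by (rule is_Essinf_bdd[where F=F and t=t, OF P sub, of "- real n" 0]) (simp, rule Nn_bnd')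

lemma UW_AE: "AE \<omega> in M. \<forall>n. UU M F t Z n \<omega> \<le> UU M F t Z (Suc n) \<omega> \<and> WW M F t Z (Suc n) \<omega> \<le> WW M F t Z n \<omega>
   \<and> 0 \<le> UU M F t Z n \<omega> \<and> WW M F t Z n \<omega> \<le> 0 \<and> UU M F t Z n \<omega> \<le> Pp Z n \<omega> \<and> - Nn Z n \<omega> \<ge> WW M F t Z n \<omega>"
  unfolding AE_all_countable
proof
  fix n
  have 1: "AE \<omega> in M. UU M F t Z n \<omega> \<le> UU M F t Z (Suc n) \<omega>"
    by (rule is_Essinf_mono[OF isU isU]) (intro AE_I2, rule Pp_mono)
  have 2: "AE \<omega> in M. WW M F t Z (Suc n) \<omega> \<le> WW M F t Z n \<omega>"
    by (rule is_Essinf_mono[OF isW isW]) (intro AE_I2, rule Nn_mono)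
  have 3: "AE \<omega> in M. 0 \<le> UU M F t Z n \<omega>"
    by (rule is_Essinf_ge[OF isU, of "\<lambda>_. 0", simplified]) (intro AE_I2, simp add: Pp_bnd)
  have 4: "AE \<omega> in M. UU M F t Z n \<omega> \<le> Pp Z n \<omega>" by (rule is_Essinf_le[OF isU])
  have 5: "AE \<omega> in M. WW M F t Z n \<omega> \<le> - Nn Z n \<omega>" by (rule is_Essinf_le[OF isW])
  show "AE \<omega> in M. UU M F t Z n \<omega> \<le> UU M F t Z (Suc n) \<omega> \<and> WW M F t Z (Suc n) \<omega> \<le> WW M F t Z n \<omega>
   \<and> 0 \<le> UU M F t Z n \<omega> \<and> WW M F t Z n \<omega> \<le> 0 \<and> UU M F t Z n \<omega> \<le> Pp Z n \<omega> \<and> - Nn Z n \<omega> \<ge> WW M F t Z n \<omega>"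
    using 1 2 3 4 5
  proof eventually_elim
    case (elim \<omega>)
    have "- Nn Z n \<omega> \<le> 0" by (rule Nn_nonpos)
    then show ?case using elim order_trans[of "WW M F t Z n \<omega>" "- Nn Z n \<omega>" 0] by auto
  qed
qed

lemma Essinf_EI: "AE \<omega> in M. Essinf M F t Z \<omega> = EI M F t Z \<omega>"
  using UW_AE[of Z]
proof eventually_elim
  case (elim \<omega>)
  have "incseq (\<lambda>n. UU M F t Z n \<omega>)" by (rule incseq_SucI) (use elim in auto)
  then have a: "lim (\<lambda>n. UU M F t Z n \<omega>) = (SUP n. UU M F t Z n \<omega>)" by (intro limI LIMSEQ_SUP)
  have "incseq (\<lambda>n. - WW M F t Z n \<omega>)" by (rule incseq_SucI) (use elim in auto)
  then have b: "lim (\<lambda>n. - WW M F t Z n \<omega>) = (SUP n. - WW M F t Z n \<omega>)" by (intro limI LIMSEQ_SUP)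
  show ?case unfolding Essinf_unfold EI_def a b ..
qed

lemma EI_meas: "EI M F t Z \<in> borel_measurable (F t)"
proof -
  have [measurable]: "UU M F t Z n \<in> borel_measurable (F t)" for n using isU unfolding is_Essinf_def by auto
  have [measurable]: "WW M F t Z n \<in> borel_measurable (F t)" for n using isW unfolding is_Essinf_def by auto
  show ?thesis unfolding EI_def ereal_minus_conv_def by measurable
qed

lemma EI_nonneg: "AE \<omega> in M. 0 \<le> (SUP n. UU M F t Z n \<omega>) \<and> 0 \<le> (SUP n. - WW M F t Z n \<omega>)"
  using UW_AE[of Z]
proof eventually_elim
  case (elim \<omega>)
  have "0 \<le> UU M F t Z 0 \<omega>" using elim by auto
  also have "\<dots> \<le> (SUP n. UU M F t Z n \<omega>)" by (rule SUP_upper) auto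
  finally have 1: "0 \<le> (SUP n. UU M F t Z n \<omega>)" .
  have "0 \<le> - WW M F t Z 0 \<omega>" using elim by auto
  also have "\<dots> \<le> (SUP n. - WW M F t Z n \<omega>)" by (rule SUP_upper) auto
  finally show ?case using 1 by auto
qed

lemma Essinf_le: "AE \<omega> in M. Essinf M F t Z \<omega> \<le> Z \<omega>"
  using Essinf_EI[of Z] UW_AE[of Z] EI_nonneg[of Z]
proof eventually_elim
  case (elim \<omega>)
  have a: "(SUP n. UU M F t Z n \<omega>) \<le> max (Z \<omega>) 0"
  proof (rule SUP_least)
    fix n
    have "UU M F t Z n \<omega> \<le> Pp Z n \<omega>" using elim(2) by simp
    then show "UU M F t Z n \<omega> \<le> max (Z \<omega>) 0" by (rule order.trans[OF _ Pp_le])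
  qed
  have b: "max (- Z \<omega>) 0 \<le> (SUP n. - WW M F t Z n \<omega>)"
  proof -
    have "Nn Z n \<omega> \<le> - WW M F t Z n \<omega>" for n using elim(2) by (simp add: le_neg_iff)
    then show ?thesis unfolding SUP_Nn[symmetric] by (rule SUP_mono')
  qed
  have "EI M F t Z \<omega> \<le> ereal_minus_conv (max (Z \<omega>) 0) (max (- Z \<omega>) 0)"
    unfolding EI_def by (rule conv_mono) (use elim a b in auto)
  then show ?case using elim conv_id by simp
qed

lemma Essinf_mono:
  assumes "AE \<omega> in M. Z \<omega> \<le> Z' \<omega>"
  shows "AE \<omega> in M. Essinf M F t Z \<omega> \<le> Essinf M F t Z' \<omega>"
proof -
  have "AE \<omega> in M. \<forall>n. UU M F t Z n \<omega> \<le> UU M F t Z' n \<omega> \<and> WW M F t Z n \<omega> \<le> WW M F t Z' n \<omega>"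
    unfolding AE_all_countable
  proof
    fix n
    have "AE \<omega> in M. Pp Z n \<omega> \<le> Pp Z' n \<omega>" using assms by eventually_elim (rule Pp_mono2)
    note 1 = is_Essinf_mono[OF isU isU this]
    have "AE \<omega> in M. - Nn Z n \<omega> \<le> - Nn Z' n \<omega>" using assms by eventually_elim (rule Nn_mono2)
    note 2 = is_Essinf_mono[OF isW isW this]
    show "AE \<omega> in M. UU M F t Z n \<omega> \<le> UU M F t Z' n \<omega> \<and> WW M F t Z n \<omega> \<le> WW M F t Z' n \<omega>"
      using 1 2 by eventually_elim auto
  qed
  then show ?thesis using Essinf_EI[of Z] Essinf_EI[of Z'] EI_nonneg[of Z] EI_nonneg[of Z']
  proof eventually_elim
    case (elim \<omega>)
    have a: "(SUP n. UU M F t Z n \<omega>) \<le> (SUP n. UU M F t Z' n \<omega>)"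
      by (rule SUP_mono') (use elim(1) in simp)
    have b: "(SUP n. - WW M F t Z' n \<omega>) \<le> (SUP n. - WW M F t Z n \<omega>)"
      by (rule SUP_mono') (use elim(1) in simp)
    have "EI M F t Z \<omega> \<le> EI M F t Z' \<omega>"
      unfolding EI_def
      by (rule conv_mono) (use elim a b in auto)
    then show ?case using elim by simp
  qed
qed

lemma Essinf_ge:
  assumes [measurable]: "Z \<in> borel_measurable (F t)"
  shows "AE \<omega> in M. Z \<omega> \<le> Essinf M F t Z \<omega>"
proof -
  have "AE \<omega> in M. \<forall>n. Pp Z n \<omega> \<le> UU M F t Z n \<omega> \<and> - Nn Z n \<omega> \<le> WW M F t Z n \<omega>"
    unfolding AE_all_countable
  proof
    fix n
    have 1: "AE \<omega> in M. Pp Z n \<omega> \<le> UU M F t Z n \<omega>"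
      by (rule is_Essinf_ge[OF isU]) (auto simp: Pp_def)
    have 2: "AE \<omega> in M. - Nn Z n \<omega> \<le> WW M F t Z n \<omega>"
      by (rule is_Essinf_ge[OF isW]) (auto simp: Nn_def)
    show "AE \<omega> in M. Pp Z n \<omega> \<le> UU M F t Z n \<omega> \<and> - Nn Z n \<omega> \<le> WW M F t Z n \<omega>"
      using 1 2 by eventually_elim auto
  qed
  then show ?thesis using Essinf_EI[of Z] EI_nonneg[of Z]
  proof eventually_elim
    case (elim \<omega>)
    have a: "max (Z \<omega>) 0 \<le> (SUP n. UU M F t Z n \<omega>)"
      unfolding SUP_Pp[symmetric] by (rule SUP_mono') (use elim(1) in simp)
    have b: "(SUP n. - WW M F t Z n \<omega>) \<le> max (- Z \<omega>) 0"
    proof (rule SUP_least)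
      fix n
      have "- WW M F t Z n \<omega> \<le> Nn Z n \<omega>" using elim(1) by (simp add: ereal_uminus_le_reorder)
      then show "- WW M F t Z n \<omega> \<le> max (- Z \<omega>) 0" by (rule order.trans[OF _ Nn_le])
    qed
    have "ereal_minus_conv (max (Z \<omega>) 0) (max (- Z \<omega>) 0) \<le> EI M F t Z \<omega>"
      unfolding EI_def by (rule conv_mono) (use a b elim in auto)
    then show ?case using elim conv_id by simp
  qed
qed

end



lemma acc_equiv:
  fixes Phi :: "nat \<Rightarrow> 'x \<Rightarrow> 'a \<Rightarrow> ereal"
  assumes P: "prob_space M" and sub: "\<And>t. t \<le> T \<Longrightarrow> subalgebra M (F t)"
    and meas: "\<And>X s. X \<in> Xs \<Longrightarrow> s \<le> T \<Longrightarrow> Phi s X \<in> borel_measurable (F s)"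
  shows "((\<forall>X\<in>Xs. \<forall>s t. t < s \<longrightarrow> s \<le> T \<longrightarrow> (\<forall>m\<in>borel_measurable (F s).
            (AE \<omega> in M. Phi s X \<omega> \<ge> m \<omega>) \<longrightarrow> (AE \<omega> in M. Phi t X \<omega> \<ge> Essinf M F t m \<omega>)))
         \<longleftrightarrow> (\<forall>X\<in>Xs. \<forall>s t. t < s \<longrightarrow> s \<le> T \<longrightarrow>
           (AE \<omega> in M. Phi t X \<omega> \<ge> Essinf M F t (Phi s X) \<omega>))) \<and>
     ((\<forall>X\<in>Xs. \<forall>s t. t < s \<longrightarrow> s \<le> T \<longrightarrow> (\<forall>m\<in>borel_measurable (F s).
            (AE \<omega> in M. Phi s X \<omega> \<ge> m \<omega>) \<longrightarrow> (AE \<omega> in M. Phi t X \<omega> \<ge> Essinf M F t m \<omega>)))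
         \<longleftrightarrow> (\<forall>X\<in>Xs. \<forall>s t. t < s \<longrightarrow> s \<le> T \<longrightarrow> (\<forall>m \<in> borel_measurable (F t).
           (AE \<omega> in M. Phi s X \<omega> \<ge> m \<omega>) \<longrightarrow> (AE \<omega> in M. Phi t X \<omega> \<ge> m \<omega>))))"
    (is "(?A1 \<longleftrightarrow> ?A2) \<and> (?A1 \<longleftrightarrow> ?A3)")
proof -
  have 12: ?A2 if ?A1
  proof (intro ballI allI impI)
    fix X s t assume X: "X \<in> Xs" and ts: "t < s" "s \<le> T"
    have "AE \<omega> in M. Phi s X \<omega> \<ge> Phi s X \<omega>" by simp
    then show "AE \<omega> in M. Phi t X \<omega> \<ge> Essinf M F t (Phi s X) \<omega>"
      using that[rule_format, OF X ts meas[OF X ts(2)]] by blast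
  qed
  have 21: ?A1 if A2: ?A2
  proof (intro ballI allI impI)
    fix X s t m assume X: "X \<in> Xs" and ts: "t < s" "s \<le> T" and m: "m \<in> borel_measurable (F s)"
      and ge: "AE \<omega> in M. Phi s X \<omega> \<ge> m \<omega>"
    have st: "subalgebra M (F t)" using ts by (intro sub) simp
    show "AE \<omega> in M. Phi t X \<omega> \<ge> Essinf M F t m \<omega>"
      using Essinf_mono[where F=F and t=t, OF P st ge] A2[rule_format, OF X ts] by eventually_elim (meson order.trans)
  qed
  have 23: ?A3 if A2: ?A2
  proof (intro ballI allI impI)
    fix X s t m assume X: "X \<in> Xs" and ts: "t < s" "s \<le> T" and m: "m \<in> borel_measurable (F t)"
      and ge: "AE \<omega> in M. Phi s X \<omega> \<ge> m \<omega>"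
    have st: "subalgebra M (F t)" using ts by (intro sub) simp
    have 1: "AE \<omega> in M. Phi t X \<omega> \<ge> Essinf M F t (Phi s X) \<omega>" using A2[rule_format, OF X ts] .
    show "AE \<omega> in M. Phi t X \<omega> \<ge> m \<omega>"
      using Essinf_mono[where F=F and t=t, OF P st ge] Essinf_ge[where F=F and t=t, OF P st m] 1
      by eventually_elim (meson order.trans)
  qed
  have 32: ?A2 if A3: ?A3
  proof (intro ballI allI impI)
    fix X s t assume X: "X \<in> Xs" and ts: "t < s" "s \<le> T"
    have st: "subalgebra M (F t)" using ts by (intro sub) simp
    have "AE \<omega> in M. Phi s X \<omega> \<ge> EI M F t (Phi s X) \<omega>"
      using Essinf_le[where F=F and t=t, OF P st, of "Phi s X"] Essinf_EI[where F=F and t=t, OF P st, of "Phi s X"] by eventually_elim simp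
    then have "AE \<omega> in M. Phi t X \<omega> \<ge> EI M F t (Phi s X) \<omega>"
      using A3[rule_format, OF X ts EI_meas[where F=F and t=t, OF P st, of "Phi s X"]] by blast
    then show "AE \<omega> in M. Phi t X \<omega> \<ge> Essinf M F t (Phi s X) \<omega>"
      using Essinf_EI[where F=F and t=t, OF P st, of "Phi s X"] by eventually_elim simp
  qed
  show ?thesis using 12 21 23 32 by blast
qed



lemma lim_arg:
  fixes mm y :: ereal
  assumes H: "\<And>n::nat. ereal (- real n) \<le> mm \<Longrightarrow> min mm (ereal (real n)) \<le> y"
  shows "mm \<le> y"
proof (cases mm)
  case (real r)
  define n where "n = nat \<lceil>\<bar>r\<bar>\<rceil>"
  have "\<bar>r\<bar> \<le> real n" unfolding n_def by linarith
  then have "- real n \<le> r" "r \<le> real n" by linarith+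
  then show ?thesis using H[of n] real by simp
next
  case PInf
  show ?thesis
  proof (cases y)
    case (real q)
    define n where "n = nat \<lceil>\<bar>q\<bar>\<rceil> + 1"
    have "q < real n" unfolding n_def by linarith
    then show ?thesis using H[of n] PInf real by simp
  next
    case MInf
    then show ?thesis using H[of 0] PInf by simp
  qed simp
qed simp

lemma four_imp_three:
  fixes Phi :: "nat \<Rightarrow> ('a \<Rightarrow> real) \<Rightarrow> 'a \<Rightarrow> ereal"
  assumes P: "prob_space M" and subt: "subalgebra M (F t)"
  and clos1: "\<And>X A. X \<in> Xs \<Longrightarrow> A \<in> sets (F t) \<Longrightarrow> (\<lambda>x. indicator A x * X x) \<in> Xs"
  and clos2: "\<And>X c. X \<in> Xs \<Longrightarrow> c \<in> Lspace Linf M (F t) \<Longrightarrow> (\<lambda>x. X x + c x) \<in> Xs"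
  and loc: "\<And>u X A. u \<in> {s,t} \<Longrightarrow> A \<in> sets (F t) \<Longrightarrow> X \<in> Xs \<Longrightarrow>
     AE \<omega> in M. ereal (indicator A \<omega>) * Phi u X \<omega> = ereal (indicator A \<omega>) * Phi u (\<lambda>x. indicator A x * X x) \<omega>"
  and zero: "AE \<omega> in M. Phi s (\<lambda>x. 0) \<omega> = 0"
  and transl: "\<And>u X c. u \<in> {s,t} \<Longrightarrow> X \<in> Xs \<Longrightarrow> c \<in> Lspace Linf M (F t) \<Longrightarrow>
     AE \<omega> in M. Phi u (\<lambda>x. X x + c x) \<omega> = Phi u X \<omega> + ereal (c \<omega>)"
  and four: "\<And>X. X \<in> Xs \<Longrightarrow> (AE \<omega> in M. Phi s X \<omega> \<ge> 0) \<Longrightarrow> (AE \<omega> in M. Phi t X \<omega> \<ge> 0)"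
  and m[measurable]: "m \<in> borel_measurable (F t)" and X: "X \<in> Xs"
  and ge: "AE \<omega> in M. Phi s X \<omega> \<ge> m \<omega>"
  shows "AE \<omega> in M. Phi t X \<omega> \<ge> m \<omega>"
proof -
  have spt: "space (F t) = space M" using subt by (simp add: subalgebra_def)
  define A where "A n = {\<omega>\<in>space M. ereal (- real n) \<le> m \<omega>}" for n :: nat
  have key: "AE \<omega> in M. \<omega> \<in> A n \<longrightarrow> min (m \<omega>) (ereal (real n)) \<le> Phi t X \<omega>" for n
  proof -
    have An: "A n \<in> sets (F t)" unfolding A_def spt[symmetric] by measurable
    have Anc: "space M - A n \<in> sets (F t)" using sets.compl_sets[OF An] spt by simp
    define c where "c = (\<lambda>\<omega>. indicator (A n) \<omega> * real_of_ereal (min (m \<omega>) (ereal (real n))))"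
    have cA: "ereal (c \<omega>) = min (m \<omega>) (ereal (real n))" if "\<omega> \<in> A n" for \<omega>
      using that unfolding c_def A_def by (cases "m \<omega>") (auto simp: min_def)
    have cnA: "c \<omega> = 0" if "\<omega> \<notin> A n" for \<omega> using that unfolding c_def by simp
    have cb: "\<bar>c \<omega>\<bar> \<le> real n" for \<omega>
      unfolding c_def A_def by (cases "m \<omega>") (auto simp: min_def indicator_def)
    have cmeas: "c \<in> borel_measurable (F t)" unfolding c_def using An by measurable
    have cL: "(\<lambda>x. - c x) \<in> Lspace Linf M (F t)"
      unfolding Lspace_def ess_bounded_def using cmeas cb by (auto intro!: exI[of _ "real n"])
    define Y where "Y = (\<lambda>x. indicator (A n) x * X x)"
    have Y: "Y \<in> Xs" unfolding Y_def by (rule clos1[OF X An])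
    have Y': "(\<lambda>x. Y x + - c x) \<in> Xs" by (rule clos2[OF Y cL])
    have zfun: "(\<lambda>x. indicator (space M - A n) x * Y x) = (\<lambda>x. 0)"
      unfolding Y_def by (auto simp: indicator_def)
    have "AE \<omega> in M. ereal (c \<omega>) \<le> Phi s Y \<omega>"
      using loc[of s "A n" X, OF insertI1 An X] loc[of s "space M - A n" Y, OF insertI1 Anc Y] zero ge AE_space
      unfolding zfun Y_def[symmetric]
    proof eventually_elim
      case (elim \<omega>)
      show ?case
      proof (cases "\<omega> \<in> A n")
        case True
        then have "Phi s X \<omega> = Phi s Y \<omega>" using elim(1) by simp
        then show ?thesis using elim True cA[OF True] by (metis min.coboundedI1)
      next
        case False
        then have "Phi s Y \<omega> = 0" using elim by simp
        then show ?thesis using False cnA[OF False] by simp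
      qed
    qed
    then have "AE \<omega> in M. 0 \<le> Phi s (\<lambda>x. Y x + - c x) \<omega>"
      using transl[of s Y "\<lambda>x. - c x", OF insertI1 Y cL]
    proof eventually_elim
      case (elim \<omega>)
      then show ?case by (cases "Phi s Y \<omega>") auto
    qed
    from four[OF Y' this] have "AE \<omega> in M. 0 \<le> Phi t (\<lambda>x. Y x + - c x) \<omega>" .
    then show ?thesis
      using transl[of t Y "\<lambda>x. - c x", OF insertI2[OF singletonI] Y cL] loc[of t "A n" X, OF insertI2[OF singletonI] An X]
      unfolding Y_def[symmetric]
    proof eventually_elim
      case (elim \<omega>)
      show ?case
      proof
        assume w: "\<omega> \<in> A n"
        have "ereal (c \<omega>) \<le> Phi t Y \<omega>" using elim by (cases "Phi t Y \<omega>") auto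
        moreover have "Phi t X \<omega> = Phi t Y \<omega>" using elim w by simp
        ultimately show "min (m \<omega>) (ereal (real n)) \<le> Phi t X \<omega>" using cA[OF w] by simp
      qed
    qed
  qed
  then have "AE \<omega> in M. \<forall>n. \<omega> \<in> A n \<longrightarrow> min (m \<omega>) (ereal (real n)) \<le> Phi t X \<omega>"
    by (simp add: AE_all_countable)
  with AE_space show ?thesis
  proof eventually_elim
    case (elim \<omega>)
    show ?case by (rule lim_arg) (use elim in \<open>auto simp: A_def\<close>)
  qed
qed




lemma Lspace_neg: "X \<in> Lspace p M N \<Longrightarrow> (\<lambda>x. - X x) \<in> Lspace p M N"
  unfolding Lspace_def ess_bounded_def by (cases p) auto

lemma Lspace_ind:
  assumes sub: "subalgebra M N" and A[measurable]: "A \<in> sets N" and X: "X \<in> Lspace p M N"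
  shows "(\<lambda>x. indicator A x * X x) \<in> Lspace p M N"
proof -
  have [measurable]: "X \<in> borel_measurable N" using X by (simp add: Lspace_def)
  have AM: "A \<in> sets M" using sub A by (auto simp: subalgebra_def)
  have m: "(\<lambda>x. indicator A x * X x) \<in> borel_measurable N" by measurable
  show ?thesis
  proof (cases p)
    case L1
    then have "integrable M X" using X by (simp add: Lspace_def)
    from integrable_mult_indicator[OF AM this] have "integrable M (\<lambda>x. indicator A x * X x)" by simp
    then show ?thesis using m L1 by (simp add: Lspace_def)
  next
    case Linf
    then obtain C where "AE \<omega> in M. \<bar>X \<omega>\<bar> \<le> C" using X by (auto simp: Lspace_def ess_bounded_def)
    then have "AE \<omega> in M. \<bar>indicator A \<omega> * X \<omega>\<bar> \<le> C"
      by eventually_elim (auto simp: indicator_def)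
    then show ?thesis using m Linf by (auto simp: Lspace_def ess_bounded_def)
  qed (use m in \<open>simp add: Lspace_def\<close>)
qed

lemma Lspace_add:
  assumes P: "prob_space M" and sub: "subalgebra M N" and X: "X \<in> Lspace p M N" and c: "c \<in> Lspace Linf M N"
  shows "(\<lambda>x. X x + c x) \<in> Lspace p M N"
proof -
  interpret prob_space M by fact
  have [measurable]: "X \<in> borel_measurable N" using X by (simp add: Lspace_def)
  have [measurable]: "c \<in> borel_measurable N" using c by (simp add: Lspace_def)
  obtain C where C: "AE \<omega> in M. \<bar>c \<omega>\<bar> \<le> C" using c by (auto simp: Lspace_def ess_bounded_def)
  have m: "(\<lambda>x. X x + c x) \<in> borel_measurable N" by measurable
  show ?thesis
  proof (cases p)
    case L1
    then have "integrable M X" using X by (simp add: Lspace_def)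
    moreover have "c \<in> borel_measurable M" by (rule measurable_from_subalg[OF sub]) measurable
    then have "integrable M c"
      by (intro integrable_const_bound[of _ C]) (use C in auto)
    ultimately have "integrable M (\<lambda>x. X x + c x)" by simp
    then show ?thesis using m L1 by (simp add: Lspace_def)
  next
    case Linf
    then obtain D where "AE \<omega> in M. \<bar>X \<omega>\<bar> \<le> D" using X by (auto simp: Lspace_def ess_bounded_def)
    then have "AE \<omega> in M. \<bar>X \<omega> + c \<omega>\<bar> \<le> D + C" using C by eventually_elim auto
    then show ?thesis using m Linf by (auto simp: Lspace_def ess_bounded_def)
  qed (use m in \<open>simp add: Lspace_def\<close>)
qed

lemma Lspace_mono:
  assumes "sets N' \<subseteq> sets N" "space N' = space N" "c \<in> Lspace p M N'"
  shows "c \<in> Lspace p M N"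
proof -
  have "subalgebra N N'" using assms by (simp add: subalgebra_def)
  then show ?thesis using assms(3) measurable_from_subalg unfolding Lspace_def by blast
qed

lemma neg_quant: "(\<forall>m\<in>borel_measurable N. Q m) \<longleftrightarrow> (\<forall>m\<in>borel_measurable N. Q (\<lambda>x. - (m x :: ereal)))"
proof
  assume H: "\<forall>m\<in>borel_measurable N. Q (\<lambda>x. - m x)"
  have "Q (\<lambda>x. - (- m x))" if "m \<in> borel_measurable N" for m
  proof -
    have "(\<lambda>x. - m x) \<in> borel_measurable N" using that by measurable
    from bspec[OF H this] show ?thesis by simp
  qed
  then show "\<forall>m\<in>borel_measurable N. Q m" by simp
qed auto




lemma AE_le_neg: "(AE \<omega> in M. (a \<omega>::ereal) \<le> - b \<omega>) = (AE \<omega> in M. b \<omega> \<le> - a \<omega>)"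
  by (intro arg_cong[where f="almost_everywhere M"] ext le_neg_iff)

lemma iff_helper: "(a \<longleftrightarrow> b) \<and> (a \<longleftrightarrow> c) \<Longrightarrow> (R \<longleftrightarrow> a) \<Longrightarrow> (R2 \<longleftrightarrow> b) \<Longrightarrow> (R3 \<longleftrightarrow> c)
   \<Longrightarrow> (R \<longleftrightarrow> R2) \<and> (R \<longleftrightarrow> R3)"
  by blast

lemma iff_helper2: "(b \<longleftrightarrow> c) \<Longrightarrow> (a \<longleftrightarrow> x) \<and> (a \<longleftrightarrow> b) \<Longrightarrow> (a \<longleftrightarrow> c)"
  by blast

theorem proposition4p3:
  fixes M :: "'a measure" and F :: "nat \<Rightarrow> 'a measure" and T :: nat and p :: Lexp
    and phi :: "nat \<Rightarrow> ('a \<Rightarrow> real) \<Rightarrow> ('a \<Rightarrow> ereal)"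
  defines "Xs \<equiv> Lspace p M (F T)"
  assumes "prob_space M"
    and "filtration M F T"
    and LM: "dynamic_LM_measure M F T Xs phi"
  shows
    "(weakly_acceptance_tc M F T Xs phi \<longleftrightarrow>
        (\<forall>X\<in>Xs. \<forall>s t. t < s \<longrightarrow> s \<le> T \<longrightarrow>
           (AE \<omega> in M. phi t X \<omega> \<ge> Essinf M F t (phi s X) \<omega>))) \<and>
     (weakly_acceptance_tc M F T Xs phi \<longleftrightarrow>
        (\<forall>X\<in>Xs. \<forall>s t. t < s \<longrightarrow> s \<le> T \<longrightarrow> (\<forall>m \<in> borel_measurable (F t).
           (AE \<omega> in M. phi s X \<omega> \<ge> m \<omega>) \<longrightarrow> (AE \<omega> in M. phi t X \<omega> \<ge> m \<omega>)))) \<and>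
     (dynamic_monetary_utility_measure M F T Xs phi \<longrightarrow>
        (weakly_acceptance_tc M F T Xs phi \<longleftrightarrow>
          (\<forall>X\<in>Xs. \<forall>s t. t < s \<longrightarrow> s \<le> T \<longrightarrow>
             (AE \<omega> in M. phi s X \<omega> \<ge> 0) \<longrightarrow> (AE \<omega> in M. phi t X \<omega> \<ge> 0)))) \<and>
     (weakly_rejection_tc M F T Xs phi \<longleftrightarrow>
        (\<forall>X\<in>Xs. \<forall>s t. t < s \<longrightarrow> s \<le> T \<longrightarrow>
           (AE \<omega> in M. phi t X \<omega> \<le> Esssup M F t (phi s X) \<omega>))) \<and>
     (weakly_rejection_tc M F T Xs phi \<longleftrightarrow>
        (\<forall>X\<in>Xs. \<forall>s t. t < s \<longrightarrow> s \<le> T \<longrightarrow> (\<forall>m \<in> borel_measurable (F t).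
           (AE \<omega> in M. phi s X \<omega> \<le> m \<omega>) \<longrightarrow> (AE \<omega> in M. phi t X \<omega> \<le> m \<omega>)))) \<and>
     (dynamic_monetary_utility_measure M F T Xs phi \<longrightarrow>
        (weakly_rejection_tc M F T Xs phi \<longleftrightarrow>
          (\<forall>X\<in>Xs. \<forall>s t. t < s \<longrightarrow> s \<le> T \<longrightarrow>
             (AE \<omega> in M. phi s X \<omega> \<le> 0) \<longrightarrow> (AE \<omega> in M. phi t X \<omega> \<le> 0))))"
    (is "(?W \<longleftrightarrow> ?A2) \<and> (?W \<longleftrightarrow> ?A3) \<and> (?MU \<longrightarrow> (?W \<longleftrightarrow> ?A4)) \<and>
         (?R \<longleftrightarrow> ?R2) \<and> (?R \<longleftrightarrow> ?R3) \<and> (?MU \<longrightarrow> (?R \<longleftrightarrow> ?R4))")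
proof -
  have P: "prob_space M" by fact
  note filt = assms(3)[unfolded filtration_def]
  have sub: "\<And>t. t \<le> T \<Longrightarrow> subalgebra M (F t)" using filt by simp
  have fmono: "\<And>s t. s \<le> t \<Longrightarrow> t \<le> T \<Longrightarrow> sets (F s) \<subseteq> sets (F t)" using filt by simp
  have spc: "\<And>t. t \<le> T \<Longrightarrow> space (F t) = space M" using sub by (simp add: subalgebra_def)
  note LMd = LM[unfolded dynamic_LM_measure_def]
  have meas: "\<And>X s. X \<in> Xs \<Longrightarrow> s \<le> T \<Longrightarrow> phi s X \<in> borel_measurable (F s)"
    using LMd by simp
  have loc: "\<And>u A X. u \<le> T \<Longrightarrow> A \<in> sets (F u) \<Longrightarrow> X \<in> Xs \<Longrightarrow>
     AE \<omega> in M. ereal (indicator A \<omega>) * phi u X \<omega> = ereal (indicator A \<omega>) * phi u (\<lambda>x. indicator A x * X x) \<omega>"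
    using LMd by simp
  have closneg: "\<And>X. X \<in> Xs \<Longrightarrow> (\<lambda>x. - X x) \<in> Xs" unfolding Xs_def by (rule Lspace_neg)
  have clos1: "(\<lambda>x. indicator A x * X x) \<in> Xs" if "t \<le> T" "X \<in> Xs" "A \<in> sets (F t)" for X A t
  proof -
    have "A \<in> sets (F T)" using fmono[OF that(1) order_refl] that(3) by blast
    then show ?thesis using that(2) unfolding Xs_def by (rule Lspace_ind[OF sub[OF order_refl]])
  qed
  have Linf_mono: "c \<in> Lspace Linf M (F s)" if "t \<le> s" "s \<le> T" "c \<in> Lspace Linf M (F t)" for c t s
    by (rule Lspace_mono[OF fmono[OF that(1,2)] _ that(3)]) (use spc that in simp)
  have clos2: "(\<lambda>x. X x + c x) \<in> Xs" if "t \<le> T" "X \<in> Xs" "c \<in> Lspace Linf M (F t)" for X c t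
    using Lspace_add[OF P sub[OF order_refl] that(2)[unfolded Xs_def] Linf_mono[OF that(1) order_refl that(3)]]
    unfolding Xs_def .

  have AQ: "(?W \<longleftrightarrow> ?A2) \<and> (?W \<longleftrightarrow> ?A3)"
    using acc_equiv[where T=T and M=M and F=F and Xs=Xs and Phi=phi, OF P sub meas] unfolding weakly_acceptance_tc_def .

  \<comment> \<open>rejection via negation\<close>
  have measN: "(\<lambda>\<omega>. - phi s X \<omega>) \<in> borel_measurable (F s)" if "X \<in> Xs" "s \<le> T" for X s
    using meas[OF that] by measurable
  note NQ = acc_equiv[where T=T and M=M and F=F and Xs=Xs and Phi="\<lambda>s X \<omega>. - phi s X \<omega>", OF P sub measN]
  have R1: "?R \<longleftrightarrow> (\<forall>X\<in>Xs. \<forall>s t. t < s \<longrightarrow> s \<le> T \<longrightarrow> (\<forall>m\<in>borel_measurable (F s).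
            (AE \<omega> in M. - phi s X \<omega> \<ge> m \<omega>) \<longrightarrow> (AE \<omega> in M. - phi t X \<omega> \<ge> Essinf M F t m \<omega>)))"
  proof
    assume R: ?R
    show "\<forall>X\<in>Xs. \<forall>s t. t < s \<longrightarrow> s \<le> T \<longrightarrow> (\<forall>m\<in>borel_measurable (F s).
            (AE \<omega> in M. - phi s X \<omega> \<ge> m \<omega>) \<longrightarrow> (AE \<omega> in M. - phi t X \<omega> \<ge> Essinf M F t m \<omega>))"
    proof (intro ballI allI impI)
      fix X s t m assume X: "X \<in> Xs" and ts: "t < s" "s \<le> T" and m: "m \<in> borel_measurable (F s)"
        and ge: "AE \<omega> in M. - phi s X \<omega> \<ge> m \<omega>"
      have m': "(\<lambda>x. - m x) \<in> borel_measurable (F s)" using m by measurable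
      have "AE \<omega> in M. phi s X \<omega> \<le> - m \<omega>" using ge AE_le_neg[where M=M and a="phi s X" and b=m] by simp
      then have "AE \<omega> in M. phi t X \<omega> \<le> Esssup M F t (\<lambda>x. - m x) \<omega>"
        using R X ts m' unfolding weakly_rejection_tc_def by simp
      then have "AE \<omega> in M. phi t X \<omega> \<le> - Essinf M F t m \<omega>" by (simp add: Esssup_def)
      then show "AE \<omega> in M. - phi t X \<omega> \<ge> Essinf M F t m \<omega>"
        using AE_le_neg[where M=M and a="phi t X" and b="Essinf M F t m"] by simp
    qed
  next
    assume N: "\<forall>X\<in>Xs. \<forall>s t. t < s \<longrightarrow> s \<le> T \<longrightarrow> (\<forall>m\<in>borel_measurable (F s).
            (AE \<omega> in M. - phi s X \<omega> \<ge> m \<omega>) \<longrightarrow> (AE \<omega> in M. - phi t X \<omega> \<ge> Essinf M F t m \<omega>))"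
    show ?R unfolding weakly_rejection_tc_def
    proof (intro ballI allI impI)
      fix X s t m assume X: "X \<in> Xs" and ts: "t < s" "s \<le> T" and m: "m \<in> borel_measurable (F s)"
        and le: "AE \<omega> in M. phi s X \<omega> \<le> m \<omega>"
      have m': "(\<lambda>x. - m x) \<in> borel_measurable (F s)" using m by measurable
      have "AE \<omega> in M. phi s X \<omega> \<le> - (- m \<omega>)" using le by simp
      then have "AE \<omega> in M. - m \<omega> \<le> - phi s X \<omega>" using AE_le_neg[where M=M and a="phi s X" and b="\<lambda>x. - m x"] by simp
      then have "AE \<omega> in M. Essinf M F t (\<lambda>x. - m x) \<omega> \<le> - phi t X \<omega>"
        using N X ts m' by simp
      then show "AE \<omega> in M. phi t X \<omega> \<le> Esssup M F t m \<omega>"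
        using AE_le_neg[where M=M and a="phi t X" and b="Essinf M F t (\<lambda>x. - m x)"] by (simp add: Esssup_def)
    qed
  qed
  have R2: "?R2 \<longleftrightarrow> (\<forall>X\<in>Xs. \<forall>s t. t < s \<longrightarrow> s \<le> T \<longrightarrow>
           (AE \<omega> in M. - phi t X \<omega> \<ge> Essinf M F t (\<lambda>\<omega>. - phi s X \<omega>) \<omega>))"
    unfolding Esssup_def using AE_le_neg[where M=M and a="phi t X" and b="Essinf M F t (\<lambda>\<omega>. - phi s X \<omega>)" for t s X] by simp
  have R3: "?R3 \<longleftrightarrow> (\<forall>X\<in>Xs. \<forall>s t. t < s \<longrightarrow> s \<le> T \<longrightarrow> (\<forall>m\<in>borel_measurable (F t).
            (AE \<omega> in M. - phi s X \<omega> \<ge> m \<omega>) \<longrightarrow> (AE \<omega> in M. - phi t X \<omega> \<ge> m \<omega>)))"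
  proof -
    have "(\<forall>m\<in>borel_measurable (F t). (AE \<omega> in M. phi s X \<omega> \<le> m \<omega>) \<longrightarrow> (AE \<omega> in M. phi t X \<omega> \<le> m \<omega>))
      \<longleftrightarrow> (\<forall>m\<in>borel_measurable (F t). (AE \<omega> in M. - phi s X \<omega> \<ge> m \<omega>) \<longrightarrow> (AE \<omega> in M. - phi t X \<omega> \<ge> m \<omega>))"
      for X s t
    proof -
      have e: "(AE \<omega> in M. phi u X \<omega> \<le> - m \<omega>) = (AE \<omega> in M. m \<omega> \<le> - phi u X \<omega>)" for u m
        by (rule AE_le_neg)
      show ?thesis by (subst neg_quant) (simp add: e)
    qed
    then show ?thesis by simp
  qed
  have RQ: "(?R \<longleftrightarrow> ?R2) \<and> (?R \<longleftrightarrow> ?R3)" by (rule iff_helper[OF NQ R1 R2 R3])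

  have MA: "?W \<longleftrightarrow> ?A4" if MU: ?MU
  proof -
    note MUd = MU[unfolded dynamic_monetary_utility_measure_def]
    have zero: "\<And>u. u \<le> T \<Longrightarrow> AE \<omega> in M. phi u (\<lambda>x. 0) \<omega> = 0" using MUd by simp
    have transl: "\<And>u X c. u \<le> T \<Longrightarrow> X \<in> Xs \<Longrightarrow> c \<in> Lspace Linf M (F u) \<Longrightarrow>
        AE \<omega> in M. phi u (\<lambda>x. X x + c x) \<omega> = phi u X \<omega> + ereal (c \<omega>)" using MUd by simp
    have "?A3 \<longleftrightarrow> ?A4"
    proof
      assume A3: ?A3
      show ?A4
      proof (intro ballI allI impI)
        fix X s t assume X: "X \<in> Xs" and ts: "t < s" "s \<le> T" and ge: "AE \<omega> in M. phi s X \<omega> \<ge> 0"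
        have "(\<lambda>_. 0::ereal) \<in> borel_measurable (F t)" by simp
        from A3[rule_format, OF X ts this] ge show "AE \<omega> in M. phi t X \<omega> \<ge> 0" by simp
      qed
    next
      assume A4: ?A4
      show ?A3
      proof (intro ballI allI impI)
        fix X s t m assume X: "X \<in> Xs" and ts: "t < s" "s \<le> T" and m: "m \<in> borel_measurable (F t)"
          and ge: "AE \<omega> in M. phi s X \<omega> \<ge> m \<omega>"
        have tT: "t \<le> T" using ts by simp
        have ut: "u \<le> T" "sets (F t) \<subseteq> sets (F u)" if "u \<in> {s, t}" for u
          using that ts fmono[of t u] by auto
        show "AE \<omega> in M. phi t X \<omega> \<ge> m \<omega>"
        proof (rule four_imp_three[where F=F and t=t and Phi=phi and s=s and Xs=Xs, OF P sub[OF tT]])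
          show "\<And>X A. X \<in> Xs \<Longrightarrow> A \<in> sets (F t) \<Longrightarrow> (\<lambda>x. indicator A x * X x) \<in> Xs"
            by (rule clos1[OF tT])
          show "\<And>X c. X \<in> Xs \<Longrightarrow> c \<in> Lspace Linf M (F t) \<Longrightarrow> (\<lambda>x. X x + c x) \<in> Xs"
            by (rule clos2[OF tT])
          show "AE \<omega> in M. ereal (indicator A \<omega>) * phi u X \<omega> = ereal (indicator A \<omega>) * phi u (\<lambda>x. indicator A x * X x) \<omega>"
            if "u \<in> {s, t}" "A \<in> sets (F t)" "X \<in> Xs" for u X A
            by (rule loc[OF ut(1)[OF that(1)] subsetD[OF ut(2)[OF that(1)] that(2)] that(3)])
          show "AE \<omega> in M. phi s (\<lambda>x. 0) \<omega> = 0" using zero ts by simp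
          show "AE \<omega> in M. phi u (\<lambda>x. X x + c x) \<omega> = phi u X \<omega> + ereal (c \<omega>)"
            if "u \<in> {s, t}" "X \<in> Xs" "c \<in> Lspace Linf M (F t)" for u X c
            using transl[OF ut(1)[OF that(1)] that(2) Linf_mono[OF _ ut(1)[OF that(1)] that(3)]] that(1) ts by auto
          show "AE \<omega> in M. phi t X \<omega> \<ge> 0" if "X \<in> Xs" "AE \<omega> in M. phi s X \<omega> \<ge> 0" for X
            using A4[rule_format, OF that(1) ts that(2)] .
        qed (use m X ge in auto)
      qed
    qed
    then show ?thesis by (rule iff_helper2[OF _ AQ])
  qed

  have MR: "?R \<longleftrightarrow> ?R4" if MU: ?MU
  proof -
    note MUd = MU[unfolded dynamic_monetary_utility_measure_def]
    have zero: "\<And>u. u \<le> T \<Longrightarrow> AE \<omega> in M. phi u (\<lambda>x. 0) \<omega> = 0" using MUd by simp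
    have transl: "\<And>u X c. u \<le> T \<Longrightarrow> X \<in> Xs \<Longrightarrow> c \<in> Lspace Linf M (F u) \<Longrightarrow>
        AE \<omega> in M. phi u (\<lambda>x. X x + c x) \<omega> = phi u X \<omega> + ereal (c \<omega>)" using MUd by simp
    have "?R3 \<longleftrightarrow> ?R4"
    proof
      assume R3: ?R3
      show ?R4
      proof (intro ballI allI impI)
        fix X s t assume X: "X \<in> Xs" and ts: "t < s" "s \<le> T" and le: "AE \<omega> in M. phi s X \<omega> \<le> 0"
        have "(\<lambda>_. 0::ereal) \<in> borel_measurable (F t)" by simp
        from R3[rule_format, OF X ts this] le show "AE \<omega> in M. phi t X \<omega> \<le> 0" by simp
      qed
    next
      assume R4: ?R4
      show ?R3
      proof (intro ballI allI impI)
        fix X s t m assume X: "X \<in> Xs" and ts: "t < s" "s \<le> T" and m: "m \<in> borel_measurable (F t)"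
          and le: "AE \<omega> in M. phi s X \<omega> \<le> m \<omega>"
        have tT: "t \<le> T" using ts by simp
        have ut: "u \<le> T" "sets (F t) \<subseteq> sets (F u)" if "u \<in> {s, t}" for u
          using that ts fmono[of t u] by auto
        define Psi where "Psi = (\<lambda>u Y \<omega>. - phi u (\<lambda>x. - Y x) \<omega>)"
        have m': "(\<lambda>x. - m x) \<in> borel_measurable (F t)" using m by measurable
        have X': "(\<lambda>x. - X x) \<in> Xs" by (rule closneg[OF X])
        have ge': "AE \<omega> in M. Psi s (\<lambda>x. - X x) \<omega> \<ge> - m \<omega>"
          using le unfolding Psi_def by simp
        have "AE \<omega> in M. Psi t (\<lambda>x. - X x) \<omega> \<ge> - m \<omega>"
        proof (rule four_imp_three[where F=F and t=t and Phi=Psi and s=s and Xs=Xs and m="\<lambda>x. - m x", OF P sub[OF tT]])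
          show "\<And>X A. X \<in> Xs \<Longrightarrow> A \<in> sets (F t) \<Longrightarrow> (\<lambda>x. indicator A x * X x) \<in> Xs"
            by (rule clos1[OF tT])
          show "\<And>X c. X \<in> Xs \<Longrightarrow> c \<in> Lspace Linf M (F t) \<Longrightarrow> (\<lambda>x. X x + c x) \<in> Xs"
            by (rule clos2[OF tT])
          show "AE \<omega> in M. ereal (indicator A \<omega>) * Psi u Y \<omega> = ereal (indicator A \<omega>) * Psi u (\<lambda>x. indicator A x * Y x) \<omega>"
            if "u \<in> {s, t}" "A \<in> sets (F t)" "Y \<in> Xs" for u Y A
          proof -
            have "AE \<omega> in M. ereal (indicator A \<omega>) * phi u (\<lambda>x. - Y x) \<omega> =
                ereal (indicator A \<omega>) * phi u (\<lambda>x. indicator A x * - Y x) \<omega>"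
              by (rule loc[OF ut(1)[OF that(1)] subsetD[OF ut(2)[OF that(1)] that(2)] closneg[OF that(3)]])
            moreover have "(\<lambda>x. indicator A x * - Y x) = (\<lambda>x. - (indicator A x * Y x))" by auto
            ultimately show ?thesis unfolding Psi_def by (auto elim!: eventually_mono)
          qed
          show "AE \<omega> in M. Psi s (\<lambda>x. 0) \<omega> = 0" using zero ts unfolding Psi_def by simp
          show "AE \<omega> in M. Psi u (\<lambda>x. Y x + c x) \<omega> = Psi u Y \<omega> + ereal (c \<omega>)"
            if "u \<in> {s, t}" "Y \<in> Xs" "c \<in> Lspace Linf M (F t)" for u Y c
          proof -
            have c': "(\<lambda>x. - c x) \<in> Lspace Linf M (F u)"
              using Lspace_neg Linf_mono[OF _ ut(1)[OF that(1)] that(3)] that(1) ts by auto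
            have "AE \<omega> in M. phi u (\<lambda>x. - Y x + - c x) \<omega> = phi u (\<lambda>x. - Y x) \<omega> + ereal (- c \<omega>)"
              using transl[OF ut(1)[OF that(1)] closneg[OF that(2)] c'] by simp
            moreover have "(\<lambda>x. - (Y x + c x)) = (\<lambda>x. - Y x + - c x)" by auto
            ultimately show ?thesis unfolding Psi_def
            proof (elim eventually_mono)
              fix \<omega> assume "phi u (\<lambda>x. - Y x + - c x) \<omega> = phi u (\<lambda>x. - Y x) \<omega> + ereal (- c \<omega>)"
                and "(\<lambda>x. - (Y x + c x)) = (\<lambda>x. - Y x + - c x)"
              then show "- phi u (\<lambda>x. - (Y x + c x)) \<omega> = - phi u (\<lambda>x. - Y x) \<omega> + ereal (c \<omega>)"
                by (cases "phi u (\<lambda>x. - Y x) \<omega>") auto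
            qed
          qed
          show "AE \<omega> in M. Psi t Y \<omega> \<ge> 0" if "Y \<in> Xs" "AE \<omega> in M. Psi s Y \<omega> \<ge> 0" for Y
          proof -
            have "AE \<omega> in M. phi s (\<lambda>x. - Y x) \<omega> \<le> 0" using that(2) unfolding Psi_def by simp
            then have "AE \<omega> in M. phi t (\<lambda>x. - Y x) \<omega> \<le> 0" using R4[rule_format, OF closneg[OF that(1)] ts] by blast
            then show ?thesis unfolding Psi_def by simp
          qed
        qed (use m' X' ge' in auto)
        then show "AE \<omega> in M. phi t X \<omega> \<le> m \<omega>" unfolding Psi_def by simp
      qed
    qed
    then show ?thesis by (rule iff_helper2[OF _ RQ])
  qed

  show ?thesis
  proof (intro conjI impI)
    show "?W \<longleftrightarrow> ?A2" by (rule conjunct1[OF AQ])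
    show "?W \<longleftrightarrow> ?A3" by (rule conjunct2[OF AQ])
    show "?W \<longleftrightarrow> ?A4" if ?MU by (rule MA[OF that])
    show "?R \<longleftrightarrow> ?R2" by (rule conjunct1[OF RQ])
    show "?R \<longleftrightarrow> ?R3" by (rule conjunct2[OF RQ])
    show "?R \<longleftrightarrow> ?R4" if ?MU by (rule MR[OF that])
  qed
qed

end
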